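(* Assume $m\le n$. Then there do not exist distinct Generalized Nash equilibria $\mathbf{x}=(\mathbf{x}_1,\dots,\mathbf{x}_n)$ and $\mathbf{y}=(\mathbf{y}_1,\dots,\mathbf{y}_n)$ of $G^{(2)}$ such that $\mathbf{x}_T^{(j)}\le\mathbf{y}_T^{(j)}$ for all $j\in[m]$ and $\sum_{j\in[m]}\mathbf{x}_T^{(j)}<\sum_{j\in[m]}\mathbf{y}_T^{(j)}$.
   Context: $G^{(2)}$ is a Fragile multi-CPR Game with $n\ge1$ players and $m\ge1$ CPRs: $[k]=\{1,\dots,k\}$, $C_m=\{(x_1,\dots,x_m)\in[0,1]^m:\sum_j x_j\le1\}$, $\mathcal{C}_n=\prod_{i\in[n]}C_m$, $\mathcal{C}_{-i}=\prod_{[n]\setminus\{i\}}C_m$. A profile is $\mathbf{x}=(\mathbf{x}_1,\dots,\mathbf{x}_n)$, $\mathbf{x}_i=(x_{i1},\dots,x_{im})$; write $\mathbf{x}=(\mathbf{x}_i,\mathbf{x}_{-i})$; $\mathbf{x}_T^{(j)}=\sum_i x_{ij}$, $\mathbf{x}_T^{j|i}=\sum_{\ell\ne i}x_{\ell j}$. Each CPR $j$ has return rate $\mathcal{R}_j(t)>1$ and failure probability $p_j(t)\in[0,1]$; each player $i$ has parameters $a_i,k_i$. $\mathcal{F}_{ij}(t)=(\mathcal{R}_j(t)-1)^{a_i}(1-p_j(t))-k_ip_j(t)$; utility $\mathcal{V}_i(\mathbf{x}_i;\mathbf{x}_{-i})=\sum_j x_{ij}^{a_i}\mathcal{F}_{ij}(\mathbf{x}_T^{(j)})$.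 Assumption: (1) $p_j(0)=0$, $p_j(t)=1$ for $t\ge1$; (2) $a_i\in(0,1]$, $k_i>0$; (3) each $\mathcal{F}_{ij}$ (continuous on $[0,1]$) has strictly negative first and second derivatives on $(0,1)$. $\omega_{ij}\in(0,1)$ is the unique zero of $\mathcal{F}_{ij}$ in $(0,1)$. $A(\mathbf{x}_{-i})=\{j:\mathbf{x}_T^{j|i}<\omega_{ij}\}$. $\vartheta_i(\mathbf{x}_{-i})=C_m\cap\big(\prod_{j\in A(\mathbf{x}_{-i})}[0,\omega_{ij}-\mathbf{x}_T^{j|i}]\times\prod_{j\notin A(\mathbf{x}_{-i})}\{0\}\big)$. A Generalized Nash equilibrium is $\mathbf{x}\in\mathcal{C}_n$ with, for all $i$, $\mathbf{x}_i\in\vartheta_i(\mathbf{x}_{-i})$ and $\mathcal{V}_i(\mathbf{x}_i;\mathbf{x}_{-i})\ge\mathcal{V}_i(\mathbf{z};\mathbf{x}_{-i})$ for all $\mathbf{z}\in\vartheta_i(\mathbf{x}_{-i})$. *)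

theory Defs
  imports "HOL-Analysis.Analysis"
begin

text \<open>Players are indexed by {1..n}, CPRs by {1..m}.
  A strategy of a player is a function z :: nat => real that vanishes outside {1..m};
  a profile is x :: nat => nat => real with x i j the investment of player i in CPR j,
  vanishing outside {1..n} x {1..m}.
  Parameters: R j t (return rate of CPR j), p j t (failure probability of CPR j),
  a i, k i (player parameters).\<close>

definition strat_space :: "nat \<Rightarrow> (nat \<Rightarrow> real) set" where
  "strat_space m = {z. (\<forall>j\<in>{1..m}. 0 \<le> z j \<and> z j \<le> 1) \<and> (\<forall>j. j \<notin> {1..m} \<longrightarrow> z j = 0)
                       \<and> (\<Sum>j\<in>{1..m}. z j) \<le> 1}"

definition profiles :: "nat \<Rightarrow> nat \<Rightarrow> (nat \<Rightarrow> nat \<Rightarrow> real) set" where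
  "profiles n m = {x. (\<forall>i\<in>{1..n}. x i \<in> strat_space m) \<and> (\<forall>i. i \<notin> {1..n} \<longrightarrow> x i = (\<lambda>_. 0))}"

definition xT :: "nat \<Rightarrow> (nat \<Rightarrow> nat \<Rightarrow> real) \<Rightarrow> nat \<Rightarrow> real" where
  "xT n x j = (\<Sum>i\<in>{1..n}. x i j)"

definition xT_oth :: "nat \<Rightarrow> (nat \<Rightarrow> nat \<Rightarrow> real) \<Rightarrow> nat \<Rightarrow> nat \<Rightarrow> real" where
  "xT_oth n x i j = (\<Sum>l\<in>{1..n} - {i}. x l j)"

definition FF :: "(nat \<Rightarrow> real \<Rightarrow> real) \<Rightarrow> (nat \<Rightarrow> real \<Rightarrow> real) \<Rightarrow> (nat \<Rightarrow> real) \<Rightarrow> (nat \<Rightarrow> real)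
                  \<Rightarrow> nat \<Rightarrow> nat \<Rightarrow> real \<Rightarrow> real" where
  "FF R p a k i j t = (R j t - 1) powr (a i) * (1 - p j t) - k i * p j t"

definition VV :: "nat \<Rightarrow> nat \<Rightarrow> (nat \<Rightarrow> real \<Rightarrow> real) \<Rightarrow> (nat \<Rightarrow> real \<Rightarrow> real) \<Rightarrow> (nat \<Rightarrow> real) \<Rightarrow> (nat \<Rightarrow> real)
                  \<Rightarrow> nat \<Rightarrow> (nat \<Rightarrow> real) \<Rightarrow> (nat \<Rightarrow> nat \<Rightarrow> real) \<Rightarrow> real" where
  "VV n m R p a k i z x = (\<Sum>j\<in>{1..m}. z j powr (a i) * FF R p a k i j (z j + xT_oth n x i j))"

definition omega :: "(nat \<Rightarrow> real \<Rightarrow> real) \<Rightarrow> (nat \<Rightarrow> real \<Rightarrow> real) \<Rightarrow> (nat \<Rightarrow> real) \<Rightarrow> (nat \<Rightarrow> real)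
                  \<Rightarrow> nat \<Rightarrow> nat \<Rightarrow> real" where
  "omega R p a k i j = (THE w. w \<in> {0<..<1} \<and> FF R p a k i j w = 0)"

definition Aset :: "nat \<Rightarrow> nat \<Rightarrow> (nat \<Rightarrow> real \<Rightarrow> real) \<Rightarrow> (nat \<Rightarrow> real \<Rightarrow> real) \<Rightarrow> (nat \<Rightarrow> real) \<Rightarrow> (nat \<Rightarrow> real)
                  \<Rightarrow> nat \<Rightarrow> (nat \<Rightarrow> nat \<Rightarrow> real) \<Rightarrow> nat set" where
  "Aset n m R p a k i x = {j\<in>{1..m}. xT_oth n x i j < omega R p a k i j}"

definition feas :: "nat \<Rightarrow> nat \<Rightarrow> (nat \<Rightarrow> real \<Rightarrow> real) \<Rightarrow> (nat \<Rightarrow> real \<Rightarrow> real) \<Rightarrow> (nat \<Rightarrow> real) \<Rightarrow> (nat \<Rightarrow> real)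
                  \<Rightarrow> nat \<Rightarrow> (nat \<Rightarrow> nat \<Rightarrow> real) \<Rightarrow> (nat \<Rightarrow> real) set" where
  "feas n m R p a k i x = {z \<in> strat_space m.
      (\<forall>j\<in>Aset n m R p a k i x. 0 \<le> z j \<and> z j \<le> omega R p a k i j - xT_oth n x i j) \<and>
      (\<forall>j\<in>{1..m} - Aset n m R p a k i x. z j = 0)}"

definition GNE :: "nat \<Rightarrow> nat \<Rightarrow> (nat \<Rightarrow> real \<Rightarrow> real) \<Rightarrow> (nat \<Rightarrow> real \<Rightarrow> real) \<Rightarrow> (nat \<Rightarrow> real) \<Rightarrow> (nat \<Rightarrow> real)
                  \<Rightarrow> (nat \<Rightarrow> nat \<Rightarrow> real) \<Rightarrow> bool" where
  "GNE n m R p a k x \<longleftrightarrow> x \<in> profiles n m \<and>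
     (\<forall>i\<in>{1..n}. x i \<in> feas n m R p a k i x \<and>
        (\<forall>z\<in>feas n m R p a k i x. VV n m R p a k i (x i) x \<ge> VV n m R p a k i z x))"

end

theory Submission
  imports Defs
begin

lemma Gderiv:
  fixes F :: "real \<Rightarrow> real"
  assumes "0 < u" "(F has_real_derivative D) (at (u + c))"
  shows "((\<lambda>t. t powr a * F (t + c)) has_real_derivative
            (a * u powr (a-1) * F (u+c) + u powr a * D)) (at u)"
proof -
  have "((\<lambda>t. F (t + c)) has_real_derivative D) (at u)"
    using assms(2) DERIV_shift by blast
  from DERIV_mult[OF has_real_derivative_powr[OF assms(1), of a] this] show ?thesis
    by (simp add: mult.commute)
qed

lemma key:
  fixes F F' :: "real \<Rightarrow> real" and a u v S T w sl :: real
  assumes dec: "\<And>s t. 0 \<le> s \<Longrightarrow> s < t \<Longrightarrow> t \<le> 1 \<Longrightarrow> F t < F s"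
    and der: "\<And>t. 0 < t \<Longrightarrow> t < 1 \<Longrightarrow> (F has_real_derivative F' t) (at t) \<and> F' t < 0"
    and ddec: "\<And>s t. 0 < s \<Longrightarrow> s \<le> t \<Longrightarrow> t < 1 \<Longrightarrow> F' t \<le> F' s"
    and w: "F w = 0" "0 < w" "w < 1" and a: "0 < a"
    and uv: "0 \<le> u" "u < v" "u \<le> S" "S \<le> T" "T \<le> w" "v \<le> T"
    and sl: "0 < sl"
    and optX: "\<And>h. 0 < h \<Longrightarrow> S + h \<le> w \<Longrightarrow> h \<le> sl \<Longrightarrow>
                 (u+h) powr a * F (S+h) \<le> u powr a * F S"
    and optY: "\<And>h. 0 < h \<Longrightarrow> h \<le> v \<Longrightarrow>
                 (v-h) powr a * F (T-h) \<le> v powr a * F T"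
  shows False
proof -
  have v0: "0 < v" using uv by linarith
  have Tw: "T < w"
  proof (rule ccontr)
    assume "\<not> T < w"
    hence Teq: "T = w" using uv by linarith
    have "F w < F (w - v/2)" using dec[of "w - v/2" w] uv v0 w Teq by linarith
    hence "0 < (v - v/2) powr a * F (T - v/2)" using w Teq v0 by simp
    moreover have "(v - v/2) powr a * F (T - v/2) \<le> v powr a * F T" using optY[of "v/2"] v0 by simp
    ultimately show False using Teq w by simp
  qed
  show False
  proof (cases "u = 0")
    case True
    define h where "h = min sl ((w - S)/2)"
    have Sw: "S < w" using Tw uv by linarith
    have h: "0 < h" "S + h < w" "h \<le> sl" using Sw sl unfolding h_def by (auto simp: min_def field_simps)
    have "F w < F (S + h)" using dec[of "S+h" w] h uv w by linarith
    hence "0 < (u+h) powr a * F (S+h)" using True h w by simp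
    moreover have "(u+h) powr a * F (S+h) \<le> u powr a * F S" using optX[of h] h by simp
    ultimately show False using True by simp
  next
    case False
    hence u0: "0 < u" using uv by linarith
    have S01: "0 < S" "S < 1" using u0 uv Tw w by linarith+
    have T01: "0 < T" "T < 1" using u0 uv Tw w by linarith+
    define D1 where "D1 = a * u powr (a-1) * F S + u powr a * F' S"
    define D2 where "D2 = a * v powr (a-1) * F T + v powr a * F' T"
    have d1: "((\<lambda>t. t powr a * F (t + (S - u))) has_real_derivative D1) (at u)"
      using Gderiv[OF u0, of F "F' S" "S - u" a] der[OF S01] unfolding D1_def by simp
    have d2: "((\<lambda>t. t powr a * F (t + (T - v))) has_real_derivative D2) (at v)"
      using Gderiv[OF v0, of F "F' T" "T - v" a] der[OF T01] unfolding D2_def by simp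
    have D1: "D1 \<le> 0"
    proof (rule ccontr)
      assume "\<not> D1 \<le> 0"
      then obtain d where d: "d > 0" "\<forall>h>0. h < d \<longrightarrow> u powr a * F (u + (S - u)) < (u+h) powr a * F (u + h + (S - u))"
        using DERIV_pos_inc_right[OF d1] by force
      define h where "h = min (d/2) (min sl (w - S))"
      have h: "0 < h" "h < d" "S + h \<le> w" "h \<le> sl" using d Tw uv sl unfolding h_def by auto
      have "u powr a * F (u + (S - u)) < (u+h) powr a * F (u + h + (S - u))" using d(2) h by blast
      hence "u powr a * F S < (u+h) powr a * F (S + h)" by (simp add: algebra_simps)
      thus False using optX[OF h(1) h(3) h(4)] by simp
    qed
    have D2: "D2 \<ge> 0"
    proof (rule ccontr)
      assume "\<not> D2 \<ge> 0"
      then obtain d where d: "d > 0" "\<forall>h>0. h < d \<longrightarrow> v powr a * F (v + (T - v)) < (v-h) powr a * F (v - h + (T - v))"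
        using DERIV_neg_dec_left[OF d2] by force
      define h where "h = min (d/2) v"
      have h: "0 < h" "h < d" "h \<le> v" using d v0 unfolding h_def by auto
      have "v powr a * F (v + (T - v)) < (v-h) powr a * F (v - h + (T - v))" using d(2) h by blast
      hence "v powr a * F T < (v-h) powr a * F (T - h)" by (simp add: algebra_simps)
      thus False using optY[OF h(1) h(3)] by simp
    qed
    have pu: "u powr a = u powr (a-1) * u" using u0 by (simp add: powr_diff)
    have pv: "v powr a = v powr (a-1) * v" using v0 by (simp add: powr_diff)
    have e1: "a * F S + u * F' S \<le> 0"
    proof -
      have "D1 = u powr (a-1) * (a * F S + u * F' S)" unfolding D1_def pu by (simp add: algebra_simps)
      moreover have "u powr (a-1) > 0" using u0 by simp
      ultimately show ?thesis using D1 by (simp add: mult_le_0_iff)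
    qed
    have e2: "a * F T + v * F' T \<ge> 0"
    proof -
      have "D2 = v powr (a-1) * (a * F T + v * F' T)" unfolding D2_def pv by (simp add: algebra_simps)
      moreover have "v powr (a-1) > 0" using v0 by simp
      ultimately show ?thesis using D2 by (simp add: zero_le_mult_iff)
    qed
    have "F T \<le> F S" using dec[of S T] uv S01 T01 by (cases "S = T") auto
    hence f1: "a * F T \<le> a * F S" using a by simp
    have "F' T \<le> F' S" using ddec[of S T] S01 T01 uv by simp
    hence f2: "v * F' T \<le> v * F' S" using v0 by simp
    have f3: "v * F' S < u * F' S" using der[OF S01] uv by simp
    show False using e1 e2 f1 f2 f3 by linarith
  qed
qed

lemma F_props:
  fixes F F' :: "real \<Rightarrow> real"
  assumes cont: "continuous_on {0..1} F"
    and der: "\<forall>t\<in>{0<..<1}. (F has_real_derivative F' t) (at t) \<and> F' t < 0 \<and>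
              (\<exists>F''. (F' has_real_derivative F'') (at t) \<and> F'' < 0)"
    and F0: "F 0 > 0" and F1: "F 1 < 0"
  shows "\<And>s t. 0 \<le> s \<Longrightarrow> s < t \<Longrightarrow> t \<le> 1 \<Longrightarrow> F t < F s"
    and "\<And>s t. 0 < s \<Longrightarrow> s \<le> t \<Longrightarrow> t < 1 \<Longrightarrow> F' t \<le> F' s"
    and "(THE w. w \<in> {0<..<1} \<and> F w = 0) \<in> {0<..<1} \<and> F (THE w. w \<in> {0<..<1} \<and> F w = 0) = 0"
proof -
  show dec: "F t < F s" if "0 \<le> s" "s < t" "t \<le> 1" for s t
  proof (rule DERIV_neg_imp_decreasing_open[OF that(2)])
    fix x assume "s < x" "x < t"
    thus "\<exists>y. (F has_real_derivative y) (at x) \<and> y < 0" using der that by auto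
  next
    show "continuous_on {s..t} F" using cont by (rule continuous_on_subset) (use that in auto)
  qed
  show "F' t \<le> F' s" if "0 < s" "s \<le> t" "t < 1" for s t
  proof (cases "s = t")
    case False
    hence "s < t" using that by simp
    have "F' t < F' s"
    proof (rule DERIV_neg_imp_decreasing[OF \<open>s < t\<close>])
      fix x assume "s \<le> x" "x \<le> t"
      hence "x \<in> {0<..<1}" using that by auto
      thus "\<exists>y. (F' has_real_derivative y) (at x) \<and> y < 0" using der by blast
    qed
    thus ?thesis by simp
  qed simp
  obtain z where z: "0 \<le> z" "z \<le> 1" "F z = 0" using IVT2'[of F 1 0 0] F0 F1 cont by force
  have z01: "z \<in> {0<..<1}" using z F0 F1 by (cases "z = 0"; cases "z = 1") auto
  have uniq: "w = z" if "w \<in> {0<..<1} \<and> F w = 0" for w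
  proof (rule ccontr)
    assume "w \<noteq> z"
    hence "w < z \<or> z < w" by linarith
    thus False using dec[of w z] dec[of z w] that z z01 by auto
  qed
  have "(THE w. w \<in> {0<..<1} \<and> F w = 0) = z"
    by (rule the_equality) (use z z01 uniq in auto)
  thus "(THE w. w \<in> {0<..<1} \<and> F w = 0) \<in> {0<..<1} \<and> F (THE w. w \<in> {0<..<1} \<and> F w = 0) = 0"
    using z z01 by simp
qed

lemma sum_upd:
  fixes g :: "nat \<Rightarrow> real \<Rightarrow> real"
  assumes "finite A" "j \<in> A"
  shows "(\<Sum>l\<in>A. g l ((f(j:=w)) l)) = (\<Sum>l\<in>A. g l (f l)) - g j (f j) + g j w"
proof -
  have "(\<Sum>l\<in>A. g l ((f(j:=w)) l)) = g j ((f(j:=w)) j) + (\<Sum>l\<in>A-{j}. g l ((f(j:=w)) l))"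
    by (rule sum.remove[OF assms])
  hence "(\<Sum>l\<in>A. g l ((f(j:=w)) l)) = g j w + (\<Sum>l\<in>A-{j}. g l ((f(j:=w)) l))" by simp
  also have "(\<Sum>l\<in>A-{j}. g l ((f(j:=w)) l)) = (\<Sum>l\<in>A-{j}. g l (f l))"
    by (rule sum.cong) auto
  moreover have "(\<Sum>l\<in>A. g l (f l)) = g j (f j) + (\<Sum>l\<in>A-{j}. g l (f l))"
    by (rule sum.remove[OF assms])
  ultimately show ?thesis by simp
qed

lemma VV_upd:
  assumes "j \<in> {1..m}"
  shows "VV n m R p a k i ((x i)(j:=w)) x = VV n m R p a k i (x i) x
     - x i j powr a i * FF R p a k i j (x i j + xT_oth n x i j) + w powr a i * FF R p a k i j (w + xT_oth n x i j)"
  unfolding VV_def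
  using sum_upd[of "{1..m}" j "\<lambda>l v. v powr a i * FF R p a k i l (v + xT_oth n x i l)" "x i" w] assms
  by simp

lemma prof_nonneg: "x \<in> profiles n m \<Longrightarrow> 0 \<le> x i j"
  unfolding profiles_def strat_space_def
  by (cases "i \<in> {1..n}"; cases "j \<in> {1..m}") auto

lemma xT_split: "i \<in> {1..n} \<Longrightarrow> xT n x j = x i j + xT_oth n x i j"
  unfolding xT_def xT_oth_def by (rule sum.remove) auto

lemma oth_nonneg: "x \<in> profiles n m \<Longrightarrow> 0 \<le> xT_oth n x i j"
  unfolding xT_oth_def by (rule sum_nonneg) (use prof_nonneg in auto)

lemma feas_dec:
  assumes "x i \<in> feas n m R p a k i x" "j \<in> {1..m}" "0 \<le> w" "w \<le> x i j"
  shows "(x i)(j:=w) \<in> feas n m R p a k i x"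
proof -
  define z where "z = (x i)(j:=w)"
  have xi: "x i \<in> strat_space m" and A1: "\<forall>j\<in>Aset n m R p a k i x. 0 \<le> x i j \<and> x i j \<le> omega R p a k i j - xT_oth n x i j"
    and A2: "\<forall>j\<in>{1..m} - Aset n m R p a k i x. x i j = 0"
    using assms(1) unfolding feas_def by auto
  have s: "(\<Sum>l\<in>{1..m}. z l) = (\<Sum>l\<in>{1..m}. x i l) - x i j + w"
    using sum_upd[of "{1..m}" j "\<lambda>l v. v" "x i" w] assms(2) unfolding z_def by simp
  have c1: "\<forall>l\<in>{1..m}. 0 \<le> z l \<and> z l \<le> 1" using xi assms unfolding strat_space_def z_def by force
  have c2: "\<forall>l. l \<notin> {1..m} \<longrightarrow> z l = 0" using xi assms unfolding strat_space_def z_def by auto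
  have c3: "(\<Sum>l\<in>{1..m}. z l) \<le> 1" using xi assms unfolding strat_space_def s by auto
  have c4: "\<forall>l\<in>Aset n m R p a k i x. 0 \<le> z l \<and> z l \<le> omega R p a k i l - xT_oth n x i l"
    using A1 assms unfolding z_def by force
  have c5: "\<forall>l\<in>{1..m} - Aset n m R p a k i x. z l = 0" using A2 assms unfolding z_def by force
  show ?thesis using c1 c2 c3 c4 c5 unfolding z_def[symmetric] feas_def strat_space_def by blast
qed

lemma feas_inc:
  assumes "x i \<in> feas n m R p a k i x" "j \<in> {1..m}" "j \<in> Aset n m R p a k i x"
    "0 \<le> w" "w \<le> 1" "w \<le> omega R p a k i j - xT_oth n x i j"
    "(\<Sum>l\<in>{1..m}. x i l) - x i j + w \<le> 1"
  shows "(x i)(j:=w) \<in> feas n m R p a k i x"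
proof -
  define z where "z = (x i)(j:=w)"
  have xi: "x i \<in> strat_space m" and A1: "\<forall>j\<in>Aset n m R p a k i x. 0 \<le> x i j \<and> x i j \<le> omega R p a k i j - xT_oth n x i j"
    and A2: "\<forall>j\<in>{1..m} - Aset n m R p a k i x. x i j = 0"
    using assms(1) unfolding feas_def by auto
  have s: "(\<Sum>l\<in>{1..m}. z l) = (\<Sum>l\<in>{1..m}. x i l) - x i j + w"
    using sum_upd[of "{1..m}" j "\<lambda>l v. v" "x i" w] assms(2) unfolding z_def by simp
  have c1: "\<forall>l\<in>{1..m}. 0 \<le> z l \<and> z l \<le> 1" using xi assms unfolding strat_space_def z_def by force
  have c2: "\<forall>l. l \<notin> {1..m} \<longrightarrow> z l = 0" using xi assms unfolding strat_space_def z_def by auto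
  have c3: "(\<Sum>l\<in>{1..m}. z l) \<le> 1" using assms unfolding s by auto
  have c4: "\<forall>l\<in>Aset n m R p a k i x. 0 \<le> z l \<and> z l \<le> omega R p a k i l - xT_oth n x i l"
    using A1 assms unfolding z_def by force
  have c5: "\<forall>l\<in>{1..m} - Aset n m R p a k i x. z l = 0" using A2 assms unfolding z_def by force
  show ?thesis using c1 c2 c3 c4 c5 unfolding z_def[symmetric] feas_def strat_space_def by blast
qed

theorem lemma8:
  fixes n m :: nat
    and R p :: "nat \<Rightarrow> real \<Rightarrow> real"
    and a k :: "nat \<Rightarrow> real"
  assumes "1 \<le> n" and "1 \<le> m" and "m \<le> n"
    and R_gt: "\<forall>j\<in>{1..m}. \<forall>t\<ge>0. R j t > 1"
    and p_range: "\<forall>j\<in>{1..m}. \<forall>t\<ge>0. 0 \<le> p j t \<and> p j t \<le> 1"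
    and p0: "\<forall>j\<in>{1..m}. p j 0 = 0"
    and p1: "\<forall>j\<in>{1..m}. \<forall>t\<ge>1. p j t = 1"
    and a_range: "\<forall>i\<in>{1..n}. 0 < a i \<and> a i \<le> 1"
    and k_pos: "\<forall>i\<in>{1..n}. 0 < k i"
    and F_cont: "\<forall>i\<in>{1..n}. \<forall>j\<in>{1..m}. continuous_on {0..1} (FF R p a k i j)"
    and F_deriv: "\<forall>i\<in>{1..n}. \<forall>j\<in>{1..m}. \<exists>F'. \<forall>t\<in>{0<..<1}.
              (FF R p a k i j has_real_derivative F' t) (at t) \<and> F' t < 0 \<and>
              (\<exists>F''. (F' has_real_derivative F'') (at t) \<and> F'' < 0)"
  shows "\<not> (\<exists>x y. GNE n m R p a k x \<and> GNE n m R p a k y \<and> x \<noteq> y \<and>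
              (\<forall>j\<in>{1..m}. xT n x j \<le> xT n y j) \<and>
              (\<Sum>j\<in>{1..m}. xT n x j) < (\<Sum>j\<in>{1..m}. xT n y j))"
proof
  assume "\<exists>x y. GNE n m R p a k x \<and> GNE n m R p a k y \<and> x \<noteq> y \<and>
              (\<forall>j\<in>{1..m}. xT n x j \<le> xT n y j) \<and>
              (\<Sum>j\<in>{1..m}. xT n x j) < (\<Sum>j\<in>{1..m}. xT n y j)"
  then obtain x y where gx: "GNE n m R p a k x" and gy: "GNE n m R p a k y"
    and le: "\<forall>j\<in>{1..m}. xT n x j \<le> xT n y j"
    and lt: "(\<Sum>j\<in>{1..m}. xT n x j) < (\<Sum>j\<in>{1..m}. xT n y j)" by blast
  have px: "x \<in> profiles n m" and py: "y \<in> profiles n m" using gx gy unfolding GNE_def by auto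
  have player: "(\<Sum>j\<in>{1..m}. y i j) \<le> (\<Sum>j\<in>{1..m}. x i j)" if i: "i \<in> {1..n}" for i
  proof (rule ccontr)
    assume "\<not> ?thesis"
    hence slt: "(\<Sum>j\<in>{1..m}. x i j) < (\<Sum>j\<in>{1..m}. y i j)" by simp
    obtain j where j: "j \<in> {1..m}" and xy: "x i j < y i j"
    proof (rule ccontr)
      assume "\<not> thesis"
      hence "\<forall>j\<in>{1..m}. y i j \<le> x i j" using that by force
      hence "(\<Sum>j\<in>{1..m}. y i j) \<le> (\<Sum>j\<in>{1..m}. x i j)" by (intro sum_mono) blast
      thus False using slt by simp
    qed
    define F where "F = FF R p a k i j"
    define w where "w = omega R p a k i j"
    obtain F' where F': "\<forall>t\<in>{0<..<1}. (F has_real_derivative F' t) (at t) \<and> F' t < 0 \<and>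
              (\<exists>F''. (F' has_real_derivative F'') (at t) \<and> F'' < 0)"
      using F_deriv i j unfolding F_def by blast
    have ai: "0 < a i" using a_range i by auto
    have F0: "F 0 > 0"
    proof -
      have "R j 0 > 1" using R_gt j by auto
      hence "(R j 0 - 1) powr a i > 0" by simp
      thus ?thesis using p0 j unfolding F_def FF_def by simp
    qed
    have F1: "F 1 < 0" using p1 j k_pos i unfolding F_def FF_def by simp
    have cont: "continuous_on {0..1} F" using F_cont i j unfolding F_def by blast
    note FP = F_props[OF cont F' F0 F1]
    have wprop: "w \<in> {0<..<1}" "F w = 0" using FP(3) unfolding w_def omega_def F_def by auto
    have xi: "x i \<in> feas n m R p a k i x" and opx: "\<forall>z\<in>feas n m R p a k i x. VV n m R p a k i (x i) x \<ge> VV n m R p a k i z x"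
      using gx i unfolding GNE_def by auto
    have yi: "y i \<in> feas n m R p a k i y" and opy: "\<forall>z\<in>feas n m R p a k i y. VV n m R p a k i (y i) y \<ge> VV n m R p a k i z y"
      using gy i unfolding GNE_def by auto
    define u where "u = x i j"
    define v where "v = y i j"
    define S where "S = xT n x j"
    define T where "T = xT n y j"
    define ox where "ox = xT_oth n x i j"
    define oy where "oy = xT_oth n y i j"
    have u0: "0 \<le> u" unfolding u_def using prof_nonneg[OF px] .
    have ox0: "0 \<le> ox" unfolding ox_def using oth_nonneg[OF px] .
    have oy0: "0 \<le> oy" unfolding oy_def using oth_nonneg[OF py] .
    have Sd: "S = u + ox" unfolding S_def u_def ox_def using xT_split[OF i] .
    have Td: "T = v + oy" unfolding T_def v_def oy_def using xT_split[OF i] .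
    have uv: "u < v" using xy unfolding u_def v_def .
    have ST: "S \<le> T" using le j unfolding S_def T_def by auto
    have jA: "j \<in> Aset n m R p a k i y"
    proof (rule ccontr)
      assume "j \<notin> Aset n m R p a k i y"
      hence "y i j = 0" using yi j unfolding feas_def by auto
      thus False using uv u0 unfolding v_def by simp
    qed
    have "v \<le> w - oy" using yi jA unfolding feas_def v_def w_def oy_def by auto
    hence Tw: "T \<le> w" using Td by simp
    have xstrat: "x i \<in> strat_space m" using xi unfolding feas_def by auto
    have ystrat: "y i \<in> strat_space m" using yi unfolding feas_def by auto
    have sy1: "(\<Sum>j\<in>{1..m}. y i j) \<le> 1" using ystrat unfolding strat_space_def by auto
    define sl where "sl = 1 - (\<Sum>j\<in>{1..m}. x i j)"
    have sl: "0 < sl" using sy1 slt unfolding sl_def by simp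
    have uS: "u \<le> (\<Sum>j\<in>{1..m}. x i j)" unfolding u_def
      by (rule member_le_sum) (use j prof_nonneg[OF px] in auto)
    show False
    proof (rule key[of F F' w "a i" u v S T sl])
      show "\<And>s t. 0 \<le> s \<Longrightarrow> s < t \<Longrightarrow> t \<le> 1 \<Longrightarrow> F t < F s" by (rule FP(1))
      show "\<And>t. 0 < t \<Longrightarrow> t < 1 \<Longrightarrow> (F has_real_derivative F' t) (at t) \<and> F' t < 0" using F' by auto
      show "\<And>s t. 0 < s \<Longrightarrow> s \<le> t \<Longrightarrow> t < 1 \<Longrightarrow> F' t \<le> F' s" by (rule FP(2))
      show "F w = 0" "0 < w" "w < 1" using wprop by auto
      show "0 < a i" by (rule ai)
      show "0 \<le> u" "u < v" "u \<le> S" "S \<le> T" "T \<le> w" "v \<le> T" "0 < sl"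
        using u0 uv Sd ox0 ST Tw Td oy0 sl by auto
    next
      fix h assume h: "0 < h" "S + h \<le> w" "h \<le> sl"
      have jAx: "j \<in> Aset n m R p a k i x" using j h Sd u0 unfolding Aset_def ox_def w_def by auto
      have "(x i)(j := u + h) \<in> feas n m R p a k i x"
        by (rule feas_inc[OF xi j jAx]) (use h u0 Sd uS in \<open>auto simp: u_def ox_def w_def sl_def\<close>)
      hence "VV n m R p a k i ((x i)(j := u + h)) x \<le> VV n m R p a k i (x i) x" using opx by blast
      hence "(u + h) powr a i * F (u + h + ox) \<le> u powr a i * F (u + ox)"
        using VV_upd[OF j, of n R p a k i x "u + h"] unfolding u_def ox_def F_def by simp
      thus "(u+h) powr a i * F (S+h) \<le> u powr a i * F S" using Sd by (simp add: algebra_simps)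
    next
      fix h assume h: "0 < h" "h \<le> v"
      have "(y i)(j := v - h) \<in> feas n m R p a k i y"
        by (rule feas_dec[OF yi j]) (use h in \<open>auto simp: v_def\<close>)
      hence "VV n m R p a k i ((y i)(j := v - h)) y \<le> VV n m R p a k i (y i) y" using opy by blast
      hence "(v - h) powr a i * F (v - h + oy) \<le> v powr a i * F (v + oy)"
        using VV_upd[OF j, of n R p a k i y "v - h"] unfolding v_def oy_def F_def by simp
      thus "(v-h) powr a i * F (T-h) \<le> v powr a i * F T" using Td by (simp add: algebra_simps)
    qed
  qed
  have "(\<Sum>j\<in>{1..m}. xT n y j) = (\<Sum>i\<in>{1..n}. \<Sum>j\<in>{1..m}. y i j)"
    unfolding xT_def by (rule sum.swap)
  also have "\<dots> \<le> (\<Sum>i\<in>{1..n}. \<Sum>j\<in>{1..m}. x i j)" by (rule sum_mono) (use player in auto)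
  also have "\<dots> = (\<Sum>j\<in>{1..m}. xT n x j)"
    unfolding xT_def by (rule sum.swap)
  finally show False using lt by simp
qed

end
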